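(* Let $J=\begin{bmatrix}0&I_m\\-I_m&0\end{bmatrix}$, let $H\in\mathbb{R}^{2m\times2m}$ be symmetric positive definite, and let $A=JH$, $y_0\in\mathbb{R}^{2m}$. Let $V_n\in\mathbb{R}^{2m\times n}$ be the matrix whose columns are the $H$-orthonormal basis of the Krylov subspace $\mathcal{K}_n(A,y_0)=\mathrm{span}\{y_0,Ay_0,\dots,A^{n-1}y_0\}$ produced by the Arnoldi algorithm run with the inner product $\langle x,y\rangle_H=x^THy$ (so $V_n^THV_n=I_n$), and let $H_n=V_n^THAV_n$ be the corresponding $n\times n$ upper Hessenberg matrix. Define $y_H(t)=V_nz(t)$, where $\dot z=H_nz$, $z(0)=V_n^THy_0$. Then for every $k=0,1,\dots,r$ with $r=\lfloor n/2\rfloor-1$, the quantity $$\mathcal{H}_k(y_H)=\tfrac12\, y_H^T H V_n (H_n)^{2k} V_n^T H y_H$$ is constant in $t$ along $y_H(t)$.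
   Context: The Arnoldi algorithm with inner product $\langle\cdot,\cdot\rangle_H$: $v_1=y_0/\langle y_0,y_0\rangle_H^{1/2}$; for $j=1,\dots,n$: $w_j=Av_j$, $h_{i,j}=\langle v_i,w_j\rangle_H$ and $w_j\leftarrow w_j-h_{i,j}v_i$ for $i\le j$, $h_{j+1,j}=\langle w_j,w_j\rangle_H^{1/2}$, $v_{j+1}=w_j/h_{j+1,j}$ (assumed no breakdown). $V_n=[v_1,\dots,v_n]$, $H_n=(h_{i,j})_{i,j\le n}$, and $AV_n=V_nH_n+h_{n+1,n}v_{n+1}e_n^T$ with $V_n^THv_{n+1}=0$. *)

theory Defs
  imports Complex_Main "Jordan_Normal_Form.Matrix"
begin

definition Jmat :: "nat \<Rightarrow> real mat" where
  "Jmat m = mat (2*m) (2*m) (\<lambda>(i,j).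
      if i < m \<and> j \<ge> m \<and> j - m = i then 1
      else if i \<ge> m \<and> j < m \<and> i - m = j then -1 else 0)"

definition ipH :: "real mat \<Rightarrow> real vec \<Rightarrow> real vec \<Rightarrow> real" where
  "ipH H x y = x \<bullet> (H *\<^sub>v y)"

text \<open>Modified Gram-Schmidt sweep of the Arnoldi step: for i = 1..j,
  h_{i,j} = <v_i, w>_H and w := w - h_{i,j} v_i.\<close>
definition mgs :: "real mat \<Rightarrow> real vec list \<Rightarrow> real vec \<Rightarrow> real vec" where
  "mgs H vs w = foldl (\<lambda>w v. w - ipH H v w \<cdot>\<^sub>v v) w vs"

fun arnoldi_basis :: "real mat \<Rightarrow> real mat \<Rightarrow> real vec \<Rightarrow> nat \<Rightarrow> real vec list" where
  "arnoldi_basis H A y0 0 = []"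
| "arnoldi_basis H A y0 (Suc 0) = [(1 / sqrt (ipH H y0 y0)) \<cdot>\<^sub>v y0]"
| "arnoldi_basis H A y0 (Suc (Suc j)) =
     (let vs = arnoldi_basis H A y0 (Suc j);
          w = mgs H vs (A *\<^sub>v last vs)
      in vs @ [(1 / sqrt (ipH H w w)) \<cdot>\<^sub>v w])"

text \<open>The orthogonalised vector w_j (before normalisation) of step j (j >= 1);
  h_{j+1,j} = sqrt <w_j,w_j>_H.\<close>
definition arnoldi_w :: "real mat \<Rightarrow> real mat \<Rightarrow> real vec \<Rightarrow> nat \<Rightarrow> real vec" where
  "arnoldi_w H A y0 j = (let vs = arnoldi_basis H A y0 j in mgs H vs (A *\<^sub>v last vs))"

definition arnoldi_h_sub :: "real mat \<Rightarrow> real mat \<Rightarrow> real vec \<Rightarrow> nat \<Rightarrow> real" where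
  "arnoldi_h_sub H A y0 j = sqrt (ipH H (arnoldi_w H A y0 j) (arnoldi_w H A y0 j))"

definition arnoldi_V :: "nat \<Rightarrow> real mat \<Rightarrow> real mat \<Rightarrow> real vec \<Rightarrow> nat \<Rightarrow> real mat" where
  "arnoldi_V d H A y0 n = mat_of_cols d (arnoldi_basis H A y0 n)"

definition arnoldi_Hn :: "nat \<Rightarrow> real mat \<Rightarrow> real mat \<Rightarrow> real vec \<Rightarrow> nat \<Rightarrow> real mat" where
  "arnoldi_Hn d H A y0 n = (let V = arnoldi_V d H A y0 n in V\<^sup>T * H * A * V)"

end

theory Submission
  imports Defs
begin

definition orthH :: "real mat \<Rightarrow> real vec list \<Rightarrow> bool" where
  "orthH H vs = (\<forall>i<length vs. \<forall>j<length vs. ipH H (vs!i) (vs!j) = (if i = j then 1 else 0))"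

lemma ipH_sym:
  assumes "H \<in> carrier_mat d d" "H\<^sup>T = H" "x \<in> carrier_vec d" "y \<in> carrier_vec d"
  shows "ipH H x y = ipH H y x"
proof -
  have "x \<bullet> (H *\<^sub>v y) = (H\<^sup>T *\<^sub>v x) \<bullet> y"
    using transpose_vec_mult_scalar[OF assms(1) assms(4) assms(3)] by simp
  also have "\<dots> = y \<bullet> (H *\<^sub>v x)" using assms by (simp add: comm_scalar_prod[of _ d])
  finally show ?thesis unfolding ipH_def .
qed

lemma ipH_minus_smult:
  assumes "H \<in> carrier_mat d d" "v \<in> carrier_vec d" "a \<in> carrier_vec d" "b \<in> carrier_vec d"
  shows "ipH H v (a - c \<cdot>\<^sub>v b) = ipH H v a - c * ipH H v b"
  using assms unfolding ipH_def
  by (simp add: mult_minus_distrib_mat_vec[of _ d d] mult_mat_vec[of _ d d]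
        scalar_prod_minus_distrib[of _ d])

lemma ipH_smult_right:
  assumes "H \<in> carrier_mat d d" "v \<in> carrier_vec d" "a \<in> carrier_vec d"
  shows "ipH H v (c \<cdot>\<^sub>v a) = c * ipH H v a"
  using assms unfolding ipH_def by (simp add: mult_mat_vec[of _ d d])

lemma ipH_smult_left:
  assumes "H \<in> carrier_mat d d" "v \<in> carrier_vec d" "a \<in> carrier_vec d"
  shows "ipH H (c \<cdot>\<^sub>v v) a = c * ipH H v a"
  using assms unfolding ipH_def by simp

lemma mgs_carrier:
  assumes "H \<in> carrier_mat d d"
  shows "set vs \<subseteq> carrier_vec d \<Longrightarrow> w \<in> carrier_vec d \<Longrightarrow> mgs H vs w \<in> carrier_vec d"
proof (induction vs arbitrary: w)
  case Nil thus ?case by (simp add: mgs_def)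
next
  case (Cons v vs)
  have "mgs H (v#vs) w = mgs H vs (w - ipH H v w \<cdot>\<^sub>v v)" by (simp add: mgs_def)
  moreover have "w - ipH H v w \<cdot>\<^sub>v v \<in> carrier_vec d" using Cons.prems by auto
  ultimately show ?case using Cons by auto
qed

lemma mgs_orth:
  assumes H: "H \<in> carrier_mat d d"
  shows "orthH H vs \<Longrightarrow> set vs \<subseteq> carrier_vec d \<Longrightarrow> w \<in> carrier_vec d \<Longrightarrow>
     \<forall>u\<in>set vs. ipH H u (mgs H vs w) = 0"
proof (induction vs rule: rev_induct)
  case Nil thus ?case by simp
next
  case (snoc v vs)
  define w' where "w' = mgs H vs w"
  have a: "\<forall>i<Suc (length vs). \<forall>j<Suc (length vs). ipH H ((vs@[v])!i) ((vs@[v])!j) = (if i = j then 1 else 0)"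
    using snoc.prems(1) unfolding orthH_def length_append_singleton .
  have eq: "mgs H (vs@[v]) w = w' - ipH H v w' \<cdot>\<^sub>v v" by (simp add: mgs_def w'_def)
  have ov: "orthH H vs" unfolding orthH_def
  proof (intro allI impI)
    fix i j assume ij: "i < length vs" "j < length vs"
    hence l: "i < Suc (length vs)" "j < Suc (length vs)" by auto
    have "ipH H ((vs@[v])!i) ((vs@[v])!j) = (if i = j then 1 else 0)"
      by (rule a[rule_format, OF l])
    thus "ipH H (vs!i) (vs!j) = (if i = j then 1 else 0)" using ij by (simp add: nth_append)
  qed
  have cvs: "set vs \<subseteq> carrier_vec d" using snoc.prems(2) by simp
  have cw: "w' \<in> carrier_vec d" unfolding w'_def using mgs_carrier[OF H cvs snoc.prems(3)] .
  have cv: "v \<in> carrier_vec d" using snoc.prems by auto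
  have IH: "\<forall>u\<in>set vs. ipH H u w' = 0" unfolding w'_def by (rule snoc.IH[OF ov cvs snoc.prems(3)])
  have l2: "length vs < Suc (length vs)" by simp
  have vv: "ipH H v v = 1"
  proof -
    have "ipH H ((vs@[v])!(length vs)) ((vs@[v])!(length vs)) = (if length vs = length vs then 1 else 0)"
      by (rule a[rule_format, OF l2 l2])
    thus ?thesis by simp
  qed
  have uv: "ipH H u v = 0" if "u \<in> set vs" for u
  proof -
    have "\<exists>i<length vs. vs ! i = u" using that by (simp add: in_set_conv_nth)
    then obtain i where i: "i < length vs" "u = vs!i" by blast
    have l1: "i < Suc (length vs)" and l3: "i \<noteq> length vs" using i by auto
    have "ipH H ((vs@[v])!i) ((vs@[v])!(length vs)) = (if i = length vs then 1 else 0)"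
      by (rule a[rule_format, OF l1 l2])
    hence "ipH H ((vs@[v])!i) ((vs@[v])!(length vs)) = 0" using l3 by simp
    thus ?thesis using i by (simp add: nth_append)
  qed
  show ?case
  proof
    fix u assume u: "u \<in> set (vs@[v])"
    have cu: "u \<in> carrier_vec d" using u snoc.prems by auto
    have "ipH H u (mgs H (vs@[v]) w) = ipH H u w' - ipH H v w' * ipH H u v"
      unfolding eq by (rule ipH_minus_smult[OF H cu cw cv])
    also have "\<dots> = 0"
    proof (cases "u \<in> set vs")
      case True thus ?thesis using IH uv by simp
    next
      case False hence "u = v" using u by auto
      thus ?thesis using vv by simp
    qed
    finally show "ipH H u (mgs H (vs@[v]) w) = 0" .
  qed
qed


lemma ipH_nonneg:
  assumes pd: "\<forall>x\<in>carrier_vec d. x \<noteq> 0\<^sub>v d \<longrightarrow> x \<bullet> (H *\<^sub>v x) > 0"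
    and H: "H \<in> carrier_mat d d" and x: "x \<in> carrier_vec d"
  shows "ipH H x x \<ge> 0"
proof (cases "x = 0\<^sub>v d")
  case True thus ?thesis using H unfolding ipH_def by simp
next
  case False thus ?thesis using pd x unfolding ipH_def by (auto intro: less_imp_le)
qed

lemma norm_step:
  assumes H: "H \<in> carrier_mat d d" and Hs: "H\<^sup>T = H"
    and ov: "orthH H vs" and cvs: "set vs \<subseteq> carrier_vec d" and w: "w \<in> carrier_vec d"
    and perp: "\<forall>u\<in>set vs. ipH H u w = 0" and q: "ipH H w w > 0"
  shows "orthH H (vs @ [(1 / sqrt (ipH H w w)) \<cdot>\<^sub>v w])"
proof -
  define c where "c = 1 / sqrt (ipH H w w)"
  define u where "u = c \<cdot>\<^sub>v w"
  have cu: "u \<in> carrier_vec d" using w unfolding u_def by simp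
  have "c * c * ipH H w w = 1" unfolding c_def using q
    by (simp add: field_simps)
  hence uu: "ipH H u u = 1" unfolding u_def using ipH_smult_left[OF H _ cu] ipH_smult_right[OF H w w] w
    by (simp add: ipH_smult_left[OF H w] mult.assoc)
  have vu: "ipH H x u = 0" if "x \<in> set vs" for x
  proof -
    have cx: "x \<in> carrier_vec d" using that cvs by auto
    show ?thesis unfolding u_def using ipH_smult_right[OF H cx w] perp that by simp
  qed
  have uv: "ipH H u x = 0" if "x \<in> set vs" for x
    using vu[OF that] ipH_sym[OF H Hs cu] that cvs by auto
  show ?thesis unfolding c_def[symmetric] u_def[symmetric] orthH_def
  proof (intro allI impI)
    fix i j assume i: "i < length (vs @ [u])" and j: "j < length (vs @ [u])"
    show "ipH H ((vs @ [u]) ! i) ((vs @ [u]) ! j) = (if i = j then 1 else 0)"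
    proof (cases "i < length vs")
      case True
      hence si: "vs ! i \<in> set vs" by simp
      show ?thesis
      proof (cases "j < length vs")
        case True thus ?thesis using \<open>i < length vs\<close> ov unfolding orthH_def by (simp add: nth_append)
      next
        case False hence "j = length vs" using j by simp
        thus ?thesis using \<open>i < length vs\<close> vu[OF si] by (simp add: nth_append)
      qed
    next
      case False hence ii: "i = length vs" using i by simp
      show ?thesis
      proof (cases "j < length vs")
        case True thus ?thesis using ii uv[of "vs ! j"] by (simp add: nth_append)
      next
        case False hence "j = length vs" using j by simp
        thus ?thesis using ii uu by (simp add: nth_append)
      qed
    qed
  qed
qed


lemma basis_props:
  assumes H: "H \<in> carrier_mat d d" and Hs: "H\<^sup>T = H"
    and pd: "\<forall>x\<in>carrier_vec d. x \<noteq> 0\<^sub>v d \<longrightarrow> x \<bullet> (H *\<^sub>v x) > 0"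
    and y0: "y0 \<in> carrier_vec d" and y0nz: "y0 \<noteq> 0\<^sub>v d"
    and A: "A \<in> carrier_mat d d"
    and nb: "\<forall>j \<in> {1..n}. arnoldi_h_sub H A y0 j \<noteq> 0"
  shows "j \<le> n \<Longrightarrow> length (arnoldi_basis H A y0 j) = j \<and> set (arnoldi_basis H A y0 j) \<subseteq> carrier_vec d
      \<and> orthH H (arnoldi_basis H A y0 j)"
proof (induction j rule: less_induct)
  case (less j)
  show ?case
  proof (cases j)
    case 0 thus ?thesis by (simp add: orthH_def)
  next
    case (Suc j1)
    show ?thesis
    proof (cases j1)
      case 0
      have q: "ipH H y0 y0 > 0" using pd y0 y0nz unfolding ipH_def by auto
      have "orthH H ([] @ [(1 / sqrt (ipH H y0 y0)) \<cdot>\<^sub>v y0])"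
        by (rule norm_step[OF H Hs _ _ y0 _ q]) (auto simp: orthH_def)
      thus ?thesis using Suc 0 y0 by simp
    next
      case (Suc j2)
      have jj: "j = Suc (Suc j2)" using Suc \<open>j = Suc j1\<close> by simp
      define vs where "vs = arnoldi_basis H A y0 (Suc j2)"
      have IH: "length vs = Suc j2 \<and> set vs \<subseteq> carrier_vec d \<and> orthH H vs"
        unfolding vs_def using less.IH[of "Suc j2"] less.prems jj by simp
      define w where "w = mgs H vs (A *\<^sub>v last vs)"
      have lv: "last vs \<in> carrier_vec d" using IH
        by (metis last_in_set list.size(3) nat.distinct(1) subsetD)
      have cw: "w \<in> carrier_vec d" unfolding w_def
        by (rule mgs_carrier[OF H]) (use IH lv A in auto)
      have perp: "\<forall>u\<in>set vs. ipH H u w = 0" unfolding w_def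
        by (rule mgs_orth[OF H]) (use IH lv A in auto)
      have "arnoldi_h_sub H A y0 (Suc j2) \<noteq> 0" using nb less.prems jj by auto
      hence "sqrt (ipH H w w) \<noteq> 0"
        unfolding arnoldi_h_sub_def arnoldi_w_def w_def vs_def Let_def .
      moreover have "ipH H w w \<ge> 0" by (rule ipH_nonneg[OF pd H cw])
      ultimately have q: "ipH H w w > 0" by simp
      have o: "orthH H (vs @ [(1 / sqrt (ipH H w w)) \<cdot>\<^sub>v w])"
        by (rule norm_step[OF H Hs _ _ cw perp q]) (use IH in auto)
      have eqb: "arnoldi_basis H A y0 j = vs @ [(1 / sqrt (ipH H w w)) \<cdot>\<^sub>v w]"
        unfolding jj vs_def w_def by (simp add: Let_def)
      show ?thesis unfolding eqb using o IH cw jj by simp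
    qed
  qed
qed


lemma gram_id:
  assumes H: "H \<in> carrier_mat d d" and len: "length B = n" and cB: "set B \<subseteq> carrier_vec d"
    and o: "orthH H B"
  shows "(mat_of_cols d B)\<^sup>T * H * mat_of_cols d B = 1\<^sub>m n"
proof -
  let ?V = "mat_of_cols d B"
  have V: "?V \<in> carrier_mat d n" using len by auto
  have "?V\<^sup>T * H * ?V = ?V\<^sup>T * (H * ?V)" using V H by (simp add: assoc_mult_mat[OF _ H V])
  also have "\<dots> = 1\<^sub>m n"
  proof (rule eq_matI)
    fix i j assume i: "i < dim_row (1\<^sub>m n :: real mat)" and j: "j < dim_col (1\<^sub>m n :: real mat)"
    hence i': "i < n" and j': "j < n" by auto
    have ci: "col ?V i = B ! i" using i' len cB by (simp add: col_mat_of_cols nth_mem subsetD)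
    have cj: "col ?V j = B ! j" using j' len cB by (simp add: col_mat_of_cols nth_mem subsetD)
    have "(?V\<^sup>T * (H * ?V)) $$ (i,j) = row (?V\<^sup>T) i \<bullet> col (H * ?V) j"
      by (rule index_mult_mat(1)) (use i' j' V H in auto)
    also have "\<dots> = col ?V i \<bullet> (H *\<^sub>v col ?V j)"
      using i' V by (simp only: row_transpose col_mult2[OF H V j'] mat_of_cols_carrier len)
    also have "\<dots> = ipH H (B!i) (B!j)" unfolding ci cj ipH_def ..
    also have "\<dots> = (if i = j then 1 else 0)" using o i' j' len unfolding orthH_def by simp
    finally show "(?V\<^sup>T * (H * ?V)) $$ (i,j) = 1\<^sub>m n $$ (i,j)" using i' j' by simp
  qed (use V in auto)
  finally show ?thesis .
qed

lemma pow_comm: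
  assumes "A \<in> carrier_mat n n"
  shows "A ^\<^sub>m k * A = A * A ^\<^sub>m k"
proof (induction k)
  case 0 thus ?case using assms by simp
next
  case (Suc k)
  have "A ^\<^sub>m Suc k * A = (A ^\<^sub>m k * A) * A" by simp
  also have "\<dots> = (A * A ^\<^sub>m k) * A" using Suc by simp
  also have "\<dots> = A * (A ^\<^sub>m k * A)" using assms by (simp add: assoc_mult_mat[OF assms pow_carrier_mat[OF assms] assms])
  finally show ?case by simp
qed

lemma deriv_quad:
  fixes z z' :: "real \<Rightarrow> real vec"
  assumes zc: "\<forall>t. z t \<in> carrier_vec n" and z'c: "z' t \<in> carrier_vec n" and M: "M \<in> carrier_mat n n"
   and d: "\<forall>i<n. ((\<lambda>s. z s $ i) has_real_derivative (z' t $ i)) (at t)"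
  shows "((\<lambda>s. z s \<bullet> (M *\<^sub>v z s)) has_real_derivative (z' t \<bullet> (M *\<^sub>v z t) + z t \<bullet> (M *\<^sub>v z' t))) (at t)"
proof -
  have ex: "x \<bullet> (M *\<^sub>v y) = (\<Sum>i\<in>{0..<n}. \<Sum>j\<in>{0..<n}. x $ i * (M $$ (i,j) * y $ j))"
    if "x \<in> carrier_vec n" "y \<in> carrier_vec n" for x y
    using that M by (simp add: scalar_prod_def sum_distrib_left row_def)
  have fe: "(\<lambda>s. z s \<bullet> (M *\<^sub>v z s)) = (\<lambda>s. \<Sum>i\<in>{0..<n}. \<Sum>j\<in>{0..<n}. z s $ i * (M $$ (i,j) * z s $ j))"
    using ex zc by auto
  have trm: "((\<lambda>s. z s $ i * (M $$ (i,j) * z s $ j)) has_real_derivative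
        (z' t $ i * (M $$ (i,j) * z t $ j) + z t $ i * (M $$ (i,j) * z' t $ j))) (at t)"
    if "i < n" "j < n" for i j
    by (rule DERIV_cong[OF DERIV_mult[OF d[rule_format, OF that(1)] DERIV_cmult[OF d[rule_format, OF that(2)]]]])
       (simp add: algebra_simps)
  have "((\<lambda>s. \<Sum>i\<in>{0..<n}. \<Sum>j\<in>{0..<n}. z s $ i * (M $$ (i,j) * z s $ j)) has_real_derivative
     (\<Sum>i\<in>{0..<n}. \<Sum>j\<in>{0..<n}. z' t $ i * (M $$ (i,j) * z t $ j) + z t $ i * (M $$ (i,j) * z' t $ j))) (at t)"
    by (intro DERIV_sum trm) auto
  moreover have "(\<Sum>i\<in>{0..<n}. \<Sum>j\<in>{0..<n}. z' t $ i * (M $$ (i,j) * z t $ j) + z t $ i * (M $$ (i,j) * z' t $ j))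
      = z' t \<bullet> (M *\<^sub>v z t) + z t \<bullet> (M *\<^sub>v z' t)"
    using ex[OF z'c zc[rule_format]] ex[OF zc[rule_format] z'c] by (simp add: sum.distrib)
  ultimately show ?thesis unfolding fe by simp
qed

theorem proposition2:
  fixes m n :: nat and H :: "real mat" and y0 :: "real vec" and z :: "real \<Rightarrow> real vec"
  assumes H_carrier: "H \<in> carrier_mat (2*m) (2*m)"
    and H_sym: "H\<^sup>T = H"
    and H_posdef: "\<forall>x \<in> carrier_vec (2*m). x \<noteq> 0\<^sub>v (2*m) \<longrightarrow> x \<bullet> (H *\<^sub>v x) > 0"
    and y0_dim: "y0 \<in> carrier_vec (2*m)"
    and y0_nz: "y0 \<noteq> 0\<^sub>v (2*m)"
    and no_breakdown: "\<forall>j \<in> {1..n}. arnoldi_h_sub H (Jmat m * H) y0 j \<noteq> 0"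
    and z_dim: "\<forall>t. z t \<in> carrier_vec n"
    and z_ode: "\<forall>t. \<forall>i < n. ((\<lambda>s. z s $ i) has_real_derivative
                    ((arnoldi_Hn (2*m) H (Jmat m * H) y0 n *\<^sub>v z t) $ i)) (at t)"
    and z_init: "z 0 = (arnoldi_V (2*m) H (Jmat m * H) y0 n)\<^sup>T *\<^sub>v (H *\<^sub>v y0)"
  shows "\<forall>k. k + 1 \<le> n div 2 \<longrightarrow> (\<forall>t.
     (let A = Jmat m * H; V = arnoldi_V (2*m) H A y0 n; Hn = arnoldi_Hn (2*m) H A y0 n;
          Hk = (\<lambda>y. (1/2) * (y \<bullet> (H *\<^sub>v (V *\<^sub>v ((Hn ^\<^sub>m (2*k)) *\<^sub>v (V\<^sup>T *\<^sub>v (H *\<^sub>v y)))))))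
      in Hk (V *\<^sub>v z t) = Hk (V *\<^sub>v z 0)))"
  proof (intro allI impI)
  fix k :: nat and t :: real
  define d where "d = 2*m"
  define A where "A = Jmat m * H"
  define B where "B = arnoldi_basis H A y0 n"
  define V where "V = mat_of_cols (2*m) B"
  define Hn where "Hn = arnoldi_Hn (2*m) H A y0 n"
  define P where "P = Hn ^\<^sub>m (2*k)"
  have Hc: "H \<in> carrier_mat d d" using H_carrier d_def by simp
  have Jc: "Jmat m \<in> carrier_mat d d" unfolding Jmat_def d_def by simp
  have Ac: "A \<in> carrier_mat d d" unfolding A_def using Jc Hc by simp
  have pd: "\<forall>x\<in>carrier_vec d. x \<noteq> 0\<^sub>v d \<longrightarrow> x \<bullet> (H *\<^sub>v x) > 0" using H_posdef d_def by simp
  have props: "length B = n \<and> set B \<subseteq> carrier_vec d \<and> orthH H B"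
    unfolding B_def
    by (rule basis_props[OF Hc H_sym pd _ _ Ac]) (use y0_dim y0_nz no_breakdown d_def A_def in auto)
  have Vc: "V \<in> carrier_mat d n" unfolding V_def d_def[symmetric] using props by auto
  have G: "V\<^sup>T * H * V = 1\<^sub>m n" unfolding V_def d_def[symmetric]
    using gram_id[OF Hc] props by auto
  have Hn_eq: "Hn = V\<^sup>T * H * A * V" unfolding Hn_def arnoldi_Hn_def arnoldi_V_def V_def B_def Let_def ..
  have VT: "V\<^sup>T \<in> carrier_mat n d" using Vc by simp
  have Hnc: "Hn \<in> carrier_mat n n" unfolding Hn_eq
    by (rule mult_carrier_mat[OF mult_carrier_mat[OF mult_carrier_mat[OF VT Hc] Ac] Vc])
  have Pc: "P \<in> carrier_mat n n" unfolding P_def using Hnc by simp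
  define K where "K = H * A"
  have Kc: "K \<in> carrier_mat d d" unfolding K_def using Hc Ac by simp
  have JT: "(Jmat m)\<^sup>T = - Jmat m"
    by (rule eq_matI) (auto simp: Jmat_def)
  have AT: "A\<^sup>T = - (H * Jmat m)" unfolding A_def
    using transpose_mult[OF Jc Hc] JT H_sym Hc Jc by simp
  have KT: "K\<^sup>T = - K"
  proof -
    have "K\<^sup>T = A\<^sup>T * H" unfolding K_def using transpose_mult[OF Hc Ac] H_sym by simp
    also have "\<dots> = - ((H * Jmat m) * H)" unfolding AT using Hc Jc by simp
    also have "\<dots> = - K" unfolding K_def A_def using assoc_mult_mat[OF Hc Jc Hc] by simp
    finally show ?thesis .
  qed
  have Hn_K: "Hn = (V\<^sup>T * K) * V" unfolding Hn_eq K_def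
    using assoc_mult_mat[OF _ Hc Ac, of "V\<^sup>T" n] Vc by simp
  have skew: "Hn\<^sup>T = - Hn"
  proof -
    have VTK: "V\<^sup>T * K \<in> carrier_mat n d" using Vc Kc by simp
    have "Hn\<^sup>T = V\<^sup>T * (V\<^sup>T * K)\<^sup>T" unfolding Hn_K using transpose_mult[OF VTK Vc] .
    also have "(V\<^sup>T * K)\<^sup>T = K\<^sup>T * V" using transpose_mult[of "V\<^sup>T" n d K d] Vc Kc by simp
    also have "V\<^sup>T * (K\<^sup>T * V) = - ((V\<^sup>T * K) * V)" unfolding KT
      using assoc_mult_mat[of "V\<^sup>T" n d K d V n] Vc Kc by simp
    finally show ?thesis unfolding Hn_K .
  qed
  have bck: "V\<^sup>T *\<^sub>v (H *\<^sub>v (V *\<^sub>v x)) = x" if "x \<in> carrier_vec n" for x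
  proof -
    have "(V\<^sup>T * H * V) *\<^sub>v x = V\<^sup>T *\<^sub>v (H *\<^sub>v (V *\<^sub>v x))"
    proof -
      have VTH: "V\<^sup>T * H \<in> carrier_mat n d" using VT Hc by simp
      have Vx: "V *\<^sub>v x \<in> carrier_vec d" using Vc that by simp
      show ?thesis using assoc_mult_mat_vec[OF VTH Vc that] assoc_mult_mat_vec[OF VT Hc Vx] by simp
    qed
    thus ?thesis unfolding G using that by simp
  qed
  have key: "(1/2) * ((V *\<^sub>v x) \<bullet> (H *\<^sub>v (V *\<^sub>v (P *\<^sub>v (V\<^sup>T *\<^sub>v (H *\<^sub>v (V *\<^sub>v x)))))))
      = (1/2) * (x \<bullet> (P *\<^sub>v x))" if x: "x \<in> carrier_vec n" for x
  proof -
    define w where "w = P *\<^sub>v x"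
    have wc: "w \<in> carrier_vec n" unfolding w_def using Pc x by simp
    have yc: "H *\<^sub>v (V *\<^sub>v w) \<in> carrier_vec d" using Hc Vc wc by simp
    have "(V *\<^sub>v x) \<bullet> (H *\<^sub>v (V *\<^sub>v w)) = (H *\<^sub>v (V *\<^sub>v w)) \<bullet> (V *\<^sub>v x)"
      using comm_scalar_prod[of "V *\<^sub>v x" d] yc Vc x by simp
    also have "\<dots> = (V\<^sup>T *\<^sub>v (H *\<^sub>v (V *\<^sub>v w))) \<bullet> x"
      using transpose_vec_mult_scalar[OF Vc x yc] by simp
    also have "\<dots> = w \<bullet> x" using bck[OF wc] by simp
    also have "\<dots> = x \<bullet> w" using comm_scalar_prod[OF wc x] .
    finally show ?thesis unfolding bck[OF x] w_def by simp
  qed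
  define g where "g = (\<lambda>s. (1/2) * (z s \<bullet> (P *\<^sub>v z s)))"
  have gd: "(g has_real_derivative 0) (at s)" for s
  proof -
    have zs: "z s \<in> carrier_vec n" using z_dim by simp
    have hz: "Hn *\<^sub>v z s \<in> carrier_vec n" using Hnc zs by simp
    have pz: "P *\<^sub>v z s \<in> carrier_vec n" using Pc zs by simp
    have dq: "((\<lambda>s. z s \<bullet> (P *\<^sub>v z s)) has_real_derivative
        ((Hn *\<^sub>v z s) \<bullet> (P *\<^sub>v z s) + z s \<bullet> (P *\<^sub>v (Hn *\<^sub>v z s)))) (at s)"
      by (rule deriv_quad[where z'="\<lambda>s. Hn *\<^sub>v z s" and t=s, OF z_dim hz Pc]) (use z_ode Hn_def A_def in simp)
    have HTc: "Hn\<^sup>T \<in> carrier_mat n n" using Hnc by simp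
    have "(Hn *\<^sub>v z s) \<bullet> (P *\<^sub>v z s) = z s \<bullet> (Hn\<^sup>T *\<^sub>v (P *\<^sub>v z s))"
      using transpose_vec_mult_scalar[OF HTc pz zs] by simp
    also have "\<dots> = - (z s \<bullet> (Hn *\<^sub>v (P *\<^sub>v z s)))" unfolding skew
    proof -
      have "- Hn *\<^sub>v (P *\<^sub>v z s) = - (Hn *\<^sub>v (P *\<^sub>v z s))"
        by (rule uminus_mult_mat_vec) (use Hnc Pc in simp)
      moreover have "z s \<bullet> - (Hn *\<^sub>v (P *\<^sub>v z s)) = - (z s \<bullet> (Hn *\<^sub>v (P *\<^sub>v z s)))"
        by (rule scalar_prod_uminus_right) (use Hnc zs in simp)
      ultimately show "z s \<bullet> (- Hn *\<^sub>v (P *\<^sub>v z s)) = - (z s \<bullet> (Hn *\<^sub>v (P *\<^sub>v z s)))" by simp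
    qed
    also have "Hn *\<^sub>v (P *\<^sub>v z s) = P *\<^sub>v (Hn *\<^sub>v z s)"
    proof -
      have "Hn *\<^sub>v (P *\<^sub>v z s) = (Hn * P) *\<^sub>v z s" using Hnc Pc zs by simp
      also have "Hn * P = P * Hn" unfolding P_def using pow_comm[OF Hnc] by simp
      also have "(P * Hn) *\<^sub>v z s = P *\<^sub>v (Hn *\<^sub>v z s)" using Hnc Pc zs by simp
      finally show ?thesis .
    qed
    finally have "(Hn *\<^sub>v z s) \<bullet> (P *\<^sub>v z s) + z s \<bullet> (P *\<^sub>v (Hn *\<^sub>v z s)) = 0" by simp
    hence "((\<lambda>s. z s \<bullet> (P *\<^sub>v z s)) has_real_derivative 0) (at s)" using dq by simp
    hence "(g has_real_derivative (1/2) * 0) (at s)" unfolding g_def by (rule DERIV_cmult)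
    thus ?thesis by simp
  qed
  have "g t = g 0" by (rule DERIV_isconst_all) (use gd in auto)
  thus "let A = Jmat m * H; V = arnoldi_V (2*m) H A y0 n; Hn = arnoldi_Hn (2*m) H A y0 n;
          Hk = (\<lambda>y. (1/2) * (y \<bullet> (H *\<^sub>v (V *\<^sub>v ((Hn ^\<^sub>m (2*k)) *\<^sub>v (V\<^sup>T *\<^sub>v (H *\<^sub>v y)))))))
      in Hk (V *\<^sub>v z t) = Hk (V *\<^sub>v z 0)"
    unfolding Let_def A_def[symmetric] arnoldi_V_def B_def[symmetric] V_def[symmetric] Hn_def[symmetric]
      P_def[symmetric] using key z_dim unfolding g_def by simp
qed

end
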